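(* Let $\Phi$ be the root system of type $A_{n-1}$ and let $d\le n$ be a positive integer. Then \[ \operatorname{Var}(\mathcal{X}_{\Phi^+_{=d}})=\begin{cases}\frac{1}{12}(n+d) & \text{if } 2d\le n,\\ \frac14(n-d) & \text{if } 2d\ge n,\end{cases} \] \[ \operatorname{Var}(\mathcal{X}_{\Phi^+_{\le d}})=\begin{cases}\frac{1}{18}d^3+\frac1{24}d^2+(\frac1{12}n-\frac1{72})d & \text{if } 2d\le n,\\ -\frac16 d^3+(\frac13 n-\frac7{24})d^2+(-\frac16 n^2+\frac5{12}n-\frac18)d+(\frac1{36}n^3-\frac1{12}n^2+\frac1{18}n) & \text{if } 2d\ge n.\end{cases} \]
   Context: Type $A_{n-1}$ is realized in $\mathbb{R}^n$ with standard basis $e_1,\dots,e_n$: simple roots $e_{i+1}-e_i$ ($1\le i<n$), positive roots $e_j-e_i$ ($1\le i<j\le n$), all roots $e_j-e_i$ ($i\ne j$); the height of $e_j-e_i$ is $j-i$. The Weyl group $W$ is the symmetric group $\mathcal{S}_n$ permuting coordinates. $\Phi^+_{=d}$ (resp. $\Phi^+_{\le d}$) is the set of positive roots of height exactly $d$ (resp. at most $d$). For $\beta\in\Phi^+$, $\mathcal{X}_\beta$ is the Bernoulli random variable on $W$ (uniform) with $\mathcal{X}_\beta(w)=1$ if $w(\beta)$ is a negative root and $0$ otherwise; $\mathcal{X}_\Psi=\sum_{\beta\in\Psi}\mathcal{X}_\beta$. *)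

theory Defs
  imports "HOL-Probability.Probability" "HOL-Combinatorics.Permutations"
begin

text \<open>The positive root e_j - e_i (1 <= i < j <= n) is encoded
  by the pair (i, j); its height is j - i.  The Weyl group is the symmetric group on
  {1..n}, acting by permuting coordinates, so w(e_j - e_i) = e_(w j) - e_(w i), which is a
  negative root iff w j < w i.\<close>

definition pos_roots :: "nat \<Rightarrow> (nat \<times> nat) set" where
  "pos_roots n = {(i, j). 1 \<le> i \<and> i < j \<and> j \<le> n}"

definition height :: "nat \<times> nat \<Rightarrow> nat" where
  "height \<beta> = snd \<beta> - fst \<beta>"

definition pos_roots_eq :: "nat \<Rightarrow> nat \<Rightarrow> (nat \<times> nat) set" where
  "pos_roots_eq n d = {\<beta> \<in> pos_roots n. height \<beta> = d}"

definition pos_roots_le :: "nat \<Rightarrow> nat \<Rightarrow> (nat \<times> nat) set" where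
  "pos_roots_le n d = {\<beta> \<in> pos_roots n. height \<beta> \<le> d}"

definition weyl_group :: "nat \<Rightarrow> (nat \<Rightarrow> nat) set" where
  "weyl_group n = {w. w permutes {1..n}}"

definition X_root :: "nat \<times> nat \<Rightarrow> (nat \<Rightarrow> nat) \<Rightarrow> real" where
  "X_root \<beta> w = (if w (snd \<beta>) < w (fst \<beta>) then 1 else 0)"

definition X_set :: "(nat \<times> nat) set \<Rightarrow> (nat \<Rightarrow> nat) \<Rightarrow> real" where
  "X_set \<Psi> w = (\<Sum>\<beta>\<in>\<Psi>. X_root \<beta> w)"

definition var_W :: "nat \<Rightarrow> ((nat \<Rightarrow> nat) \<Rightarrow> real) \<Rightarrow> real" where
  "var_W n X = measure_pmf.variance (pmf_of_set (weyl_group n)) X"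

end

theory Submission
  imports Defs
begin

definition ind :: "nat \<Rightarrow> nat \<Rightarrow> real" where "ind x y = (if x < y then 1 else 0)"

lemma W_finite: "finite (weyl_group n)"
  unfolding weyl_group_def by (rule finite_permutations) simp

lemma W_card: "card (weyl_group n) = fact n"
  unfolding weyl_group_def by (rule card_permutations) simp_all

lemma W_ne: "weyl_group n \<noteq> {}"
  unfolding weyl_group_def using permutes_id by blast

lemma W_inj: "w \<in> weyl_group n \<Longrightarrow> a \<noteq> b \<Longrightarrow> w a \<noteq> w b"
  unfolding weyl_group_def by (metis mem_Collect_eq permutes_inj injD)

lemma W_swap: assumes "a \<in> {1..n}" "b \<in> {1..n}"
  shows "(\<Sum>w\<in>weyl_group n. f w) = (\<Sum>w\<in>weyl_group n. f (w \<circ> Transposition.transpose a b))"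
  unfolding weyl_group_def by (rule sum_permutations_compose_right[OF permutes_swap_id[OF assms]])

lemma L1: assumes "a \<in> {1..n}" "b \<in> {1..n}" "a \<noteq> b"
  shows "(\<Sum>w\<in>weyl_group n. ind (w b) (w a)) = real (card (weyl_group n)) / 2"
proof -
  have s: "(\<Sum>w\<in>weyl_group n. ind (w b) (w a)) = (\<Sum>w\<in>weyl_group n. ind (w a) (w b))"
    using W_swap[OF assms(1,2), of "\<lambda>w. ind (w b) (w a)"] by simp
  have "(\<Sum>w\<in>weyl_group n. ind (w b) (w a)) + (\<Sum>w\<in>weyl_group n. ind (w a) (w b)) = (\<Sum>w\<in>weyl_group n. 1)"
    unfolding sum.distrib[symmetric]
  proof (rule sum.cong[OF refl])
    fix w assume "w \<in> weyl_group n"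
    then have "w a \<noteq> w b" using W_inj assms(3) by blast
    then show "ind (w b) (w a) + ind (w a) (w b) = 1" by (auto simp: ind_def)
  qed
  then show ?thesis using s by simp
qed

lemma L2: assumes "a \<in> {1..n}" "b \<in> {1..n}" "c \<in> {1..n}" "a \<noteq> b" "a \<noteq> c" "b \<noteq> c"
  shows "(\<Sum>w\<in>weyl_group n. ind (w b) (w a) * ind (w c) (w a)) = real (card (weyl_group n)) / 3"
proof -
  let ?M = "\<lambda>a b c. (\<Sum>w\<in>weyl_group n. ind (w b) (w a) * ind (w c) (w a))"
  have s1: "?M a b c = ?M b a c"
    using W_swap[OF assms(1,2), of "\<lambda>w. ind (w b) (w a) * ind (w c) (w a)"] assms by simp
  have s2: "?M a b c = ?M c b a"
    using W_swap[OF assms(1,3), of "\<lambda>w. ind (w b) (w a) * ind (w c) (w a)"] assms by (simp add: mult.commute)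
  have "?M a b c + ?M b a c + ?M c b a = (\<Sum>w\<in>weyl_group n. 1)"
    unfolding sum.distrib[symmetric]
  proof (rule sum.cong[OF refl])
    fix w assume "w \<in> weyl_group n"
    then have "w a \<noteq> w b" "w a \<noteq> w c" "w b \<noteq> w c" using W_inj assms(4-6) by blast+
    then show "ind (w b) (w a) * ind (w c) (w a) + ind (w a) (w b) * ind (w c) (w b) + ind (w b) (w c) * ind (w a) (w c) = 1"
      by (auto simp: ind_def)
  qed
  then show ?thesis using s1 s2 by simp
qed

lemma L2': assumes "a \<in> {1..n}" "b \<in> {1..n}" "c \<in> {1..n}" "a \<noteq> b" "a \<noteq> c" "b \<noteq> c"
  shows "(\<Sum>w\<in>weyl_group n. ind (w a) (w b) * ind (w a) (w c)) = real (card (weyl_group n)) / 3"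
proof -
  let ?M = "\<lambda>a b c. (\<Sum>w\<in>weyl_group n. ind (w a) (w b) * ind (w a) (w c))"
  have s1: "?M a b c = ?M b a c"
    using W_swap[OF assms(1,2), of "\<lambda>w. ind (w a) (w b) * ind (w a) (w c)"] assms by simp
  have s2: "?M a b c = ?M c b a"
    using W_swap[OF assms(1,3), of "\<lambda>w. ind (w a) (w b) * ind (w a) (w c)"] assms by (simp add: mult.commute)
  have "?M a b c + ?M b a c + ?M c b a = (\<Sum>w\<in>weyl_group n. 1)"
    unfolding sum.distrib[symmetric]
  proof (rule sum.cong[OF refl])
    fix w assume "w \<in> weyl_group n"
    then have "w a \<noteq> w b" "w a \<noteq> w c" "w b \<noteq> w c" using W_inj assms(4-6) by blast+
    then show "ind (w a) (w b) * ind (w a) (w c) + ind (w b) (w a) * ind (w b) (w c) + ind (w c) (w b) * ind (w c) (w a) = 1"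
      by (auto simp: ind_def)
  qed
  then show ?thesis using s1 s2 by simp
qed

lemma L3: assumes "a \<in> {1..n}" "b \<in> {1..n}" "c \<in> {1..n}" "a \<noteq> b" "a \<noteq> c" "b \<noteq> c"
  shows "(\<Sum>w\<in>weyl_group n. ind (w b) (w a) * ind (w c) (w b)) = real (card (weyl_group n)) / 6"
proof -
  let ?T = "\<lambda>a b c. (\<Sum>w\<in>weyl_group n. ind (w b) (w a) * ind (w c) (w b))"
  have s1: "?T a b c = ?T a c b"
    using W_swap[OF assms(2,3), of "\<lambda>w. ind (w b) (w a) * ind (w c) (w b)"] assms by simp
  have "?T a b c + ?T a c b = (\<Sum>w\<in>weyl_group n. ind (w b) (w a) * ind (w c) (w a))"
    unfolding sum.distrib[symmetric]
  proof (rule sum.cong[OF refl])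
    fix w assume "w \<in> weyl_group n"
    then have "w a \<noteq> w b" "w a \<noteq> w c" "w b \<noteq> w c" using W_inj assms(4-6) by blast+
    then show "ind (w b) (w a) * ind (w c) (w b) + ind (w c) (w a) * ind (w b) (w c) = ind (w b) (w a) * ind (w c) (w a)"
      by (auto simp: ind_def)
  qed
  then show ?thesis using s1 L2[OF assms] by simp
qed

lemma L4: assumes "a \<in> {1..n}" "b \<in> {1..n}" "c \<in> {1..n}" "e \<in> {1..n}"
   "a \<noteq> b" "a \<noteq> c" "a \<noteq> e" "b \<noteq> c" "b \<noteq> e" "c \<noteq> e"
  shows "(\<Sum>w\<in>weyl_group n. ind (w b) (w a) * ind (w e) (w c)) = real (card (weyl_group n)) / 4"
proof -
  have s1: "(\<Sum>w\<in>weyl_group n. ind (w b) (w a) * ind (w e) (w c)) = (\<Sum>w\<in>weyl_group n. ind (w a) (w b) * ind (w e) (w c))"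
    using W_swap[OF assms(1,2), of "\<lambda>w. ind (w b) (w a) * ind (w e) (w c)"] assms by simp
  have "(\<Sum>w\<in>weyl_group n. ind (w b) (w a) * ind (w e) (w c)) + (\<Sum>w\<in>weyl_group n. ind (w a) (w b) * ind (w e) (w c))
     = (\<Sum>w\<in>weyl_group n. ind (w e) (w c))"
    unfolding sum.distrib[symmetric]
  proof (rule sum.cong[OF refl])
    fix w assume "w \<in> weyl_group n"
    then have "w a \<noteq> w b" using W_inj assms by blast
    then show "ind (w b) (w a) * ind (w e) (w c) + ind (w a) (w b) * ind (w e) (w c) = ind (w e) (w c)"
      by (auto simp: ind_def)
  qed
  then show ?thesis using s1 L1[OF assms(3,4,10)] by simp
qed


definition dl :: "nat \<Rightarrow> nat \<Rightarrow> real" where "dl x y = (if x = y then 1 else 0)"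
definition rr :: "nat \<times> nat \<Rightarrow> nat \<Rightarrow> real" where "rr \<beta> v = dl (snd \<beta>) v - dl (fst \<beta>) v"

lemma dl_sum: assumes "x \<in> {1..n}" shows "(\<Sum>v\<in>{1..n}. dl x v * dl y v) = dl x y"
proof -
  have "(\<Sum>v\<in>{1..n}. dl x v * dl y v) = (\<Sum>v\<in>{1..n}. if x = v then dl x y else 0)"
    by (rule sum.cong) (auto simp: dl_def)
  also have "\<dots> = dl x y" using assms by simp
  finally show ?thesis .
qed

lemma pos_roots_mem: "(i, j) \<in> pos_roots n \<longleftrightarrow> 1 \<le> i \<and> i < j \<and> j \<le> n"
  by (simp add: pos_roots_def)

lemma rr_inner: assumes "(i,j) \<in> pos_roots n" "(k,l) \<in> pos_roots n"
  shows "(\<Sum>v\<in>{1..n}. rr (i,j) v * rr (k,l) v) = dl j l - dl j k - dl i l + dl i k"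
proof -
  have "i \<in> {1..n}" "j \<in> {1..n}" using assms by (auto simp: pos_roots_mem)
  have "(\<Sum>v\<in>{1..n}. rr (i,j) v * rr (k,l) v) =
     (\<Sum>v\<in>{1..n}. dl j v * dl l v) - (\<Sum>v\<in>{1..n}. dl j v * dl k v) - (\<Sum>v\<in>{1..n}. dl i v * dl l v) + (\<Sum>v\<in>{1..n}. dl i v * dl k v)"
    by (simp add: rr_def algebra_simps sum.distrib sum_subtractf)
  then show ?thesis using dl_sum \<open>i \<in> {1..n}\<close> \<open>j \<in> {1..n}\<close> by simp
qed

lemma cov: assumes "\<beta> \<in> pos_roots n" "\<gamma> \<in> pos_roots n"
  shows "(\<Sum>w\<in>weyl_group n. X_root \<beta> w * X_root \<gamma> w) = real (card (weyl_group n)) / 4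
     + real (card (weyl_group n)) / 12 * ((if \<beta> = \<gamma> then 1 else 0) + (\<Sum>v\<in>{1..n}. rr \<beta> v * rr \<gamma> v))"
proof -
  obtain i j k l where b: "\<beta> = (i,j)" and g: "\<gamma> = (k,l)" by (cases \<beta>, cases \<gamma>) auto
  have h: "1 \<le> i" "i < j" "j \<le> n" "1 \<le> k" "k < l" "l \<le> n" using assms b g by (auto simp: pos_roots_mem)
  then have m: "i \<in> {1..n}" "j \<in> {1..n}" "k \<in> {1..n}" "l \<in> {1..n}" by auto
  have inner: "(\<Sum>v\<in>{1..n}. rr \<beta> v * rr \<gamma> v) = dl j l - dl j k - dl i l + dl i k"
    using rr_inner assms b g by simp
  have X: "\<And>w. X_root \<beta> w * X_root \<gamma> w = ind (w j) (w i) * ind (w l) (w k)"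
    by (simp add: X_root_def ind_def b g)
  let ?N = "real (card (weyl_group n))"
  consider "i = k \<and> j = l" | "i = k \<and> j \<noteq> l" | "i \<noteq> k \<and> j = l" | "j = k" | "i = l"
    | "i \<noteq> k" "j \<noteq> l" "j \<noteq> k" "i \<noteq> l" by blast
  then show ?thesis
  proof cases
    case 1
    have "(\<Sum>w\<in>weyl_group n. ind (w j) (w i) * ind (w l) (w k)) = (\<Sum>w\<in>weyl_group n. ind (w j) (w i))"
      using 1 by (intro sum.cong) (auto simp: ind_def)
    then show ?thesis using 1 X L1[OF m(1,2)] h inner b g by (simp add: dl_def)
  next
    case 2
    then show ?thesis using X L2[OF m(1,2,4)] h inner b g by (simp add: dl_def)
  next
    case 3
    have "(\<Sum>w\<in>weyl_group n. ind (w j) (w i) * ind (w l) (w k)) = (\<Sum>w\<in>weyl_group n. ind (w j) (w i) * ind (w j) (w k))"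
      using 3 by simp
    then show ?thesis using 3 X L2'[OF m(2,1,3)] h inner b g by (simp add: dl_def)
  next
    case 4
    then show ?thesis using X L3[OF m(1,2,4)] h inner b g by (simp add: dl_def)
  next
    case 5
    have "(\<Sum>w\<in>weyl_group n. ind (w j) (w i) * ind (w l) (w k)) = (\<Sum>w\<in>weyl_group n. ind (w i) (w k) * ind (w j) (w i))"
      using 5 by (simp add: mult.commute)
    then show ?thesis using 5 X L3[OF m(3,1,2)] h inner b g by (simp add: dl_def)
  next
    case 6
    then show ?thesis using X L4[OF m(1,2,3,4)] h inner b g by (simp add: dl_def)
  qed
qed


lemma pos_roots_finite: "finite (pos_roots n)"
proof -
  have "pos_roots n \<subseteq> {1..n} \<times> {1..n}" by (auto simp: pos_roots_def)
  then show ?thesis by (rule finite_subset) simp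
qed

lemma cov2: assumes "\<beta> \<in> pos_roots n" "\<gamma> \<in> pos_roots n"
  shows "(\<Sum>w\<in>weyl_group n. (X_root \<beta> w - 1/2) * (X_root \<gamma> w - 1/2)) =
     real (card (weyl_group n)) / 12 * ((if \<beta> = \<gamma> then 1 else 0) + (\<Sum>v\<in>{1..n}. rr \<beta> v * rr \<gamma> v))"
proof -
  have L: "(\<Sum>w\<in>weyl_group n. X_root \<delta> w) = real (card (weyl_group n)) / 2" if "\<delta> \<in> pos_roots n" for \<delta>
  proof -
    obtain i j where d: "\<delta> = (i,j)" by (cases \<delta>) auto
    then have "i \<in> {1..n}" "j \<in> {1..n}" "i \<noteq> j" using that by (auto simp: pos_roots_mem)
    then show ?thesis using L1[of i n j] d by (simp add: X_root_def ind_def)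
  qed
  have "(\<Sum>w\<in>weyl_group n. (X_root \<beta> w - 1/2) * (X_root \<gamma> w - 1/2)) =
     (\<Sum>w\<in>weyl_group n. X_root \<beta> w * X_root \<gamma> w) - (\<Sum>w\<in>weyl_group n. X_root \<beta> w) / 2
      - (\<Sum>w\<in>weyl_group n. X_root \<gamma> w) / 2 + real (card (weyl_group n)) / 4"
    by (simp add: algebra_simps sum.distrib sum_subtractf sum_divide_distrib)
  then show ?thesis using cov[OF assms] L[OF assms(1)] L[OF assms(2)] by simp
qed

lemma var_formula: assumes "\<Psi> \<subseteq> pos_roots n"
  shows "var_W n (X_set \<Psi>) = (real (card \<Psi>) + (\<Sum>v\<in>{1..n}. (\<Sum>\<beta>\<in>\<Psi>. rr \<beta> v)^2)) / 12"
proof -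
  have fin: "finite \<Psi>" using assms pos_roots_finite finite_subset by blast
  let ?W = "weyl_group n"
  let ?N = "real (card ?W)"
  have Npos: "?N > 0" using W_finite W_ne by (simp add: card_gt_0_iff)
  have L: "(\<Sum>w\<in>?W. X_root \<delta> w) = ?N / 2" if "\<delta> \<in> pos_roots n" for \<delta>
  proof -
    obtain i j where d: "\<delta> = (i,j)" by (cases \<delta>) auto
    then have "i \<in> {1..n}" "j \<in> {1..n}" "i \<noteq> j" using that by (auto simp: pos_roots_mem)
    then show ?thesis using L1[of i n j] d by (simp add: X_root_def ind_def)
  qed
  have E: "measure_pmf.expectation (pmf_of_set ?W) (X_set \<Psi>) = real (card \<Psi>) / 2"
  proof -
    have "measure_pmf.expectation (pmf_of_set ?W) (X_set \<Psi>) = (\<Sum>w\<in>?W. X_set \<Psi> w) / ?N"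
      by (rule integral_pmf_of_set[OF W_ne W_finite])
    also have "(\<Sum>w\<in>?W. X_set \<Psi> w) = (\<Sum>\<beta>\<in>\<Psi>. \<Sum>w\<in>?W. X_root \<beta> w)"
      unfolding X_set_def by (rule sum.swap)
    also have "\<dots> = (\<Sum>\<beta>\<in>\<Psi>. ?N / 2)" using L assms by (intro sum.cong) auto
    finally show ?thesis using Npos by simp
  qed
  have U: "X_set \<Psi> w - real (card \<Psi>) / 2 = (\<Sum>\<beta>\<in>\<Psi>. X_root \<beta> w - 1/2)" for w
    by (simp add: X_set_def sum_subtractf)
  have "var_W n (X_set \<Psi>) = (\<Sum>w\<in>?W. (X_set \<Psi> w - real (card \<Psi>) / 2)^2) / ?N"
    unfolding var_W_def E by (rule integral_pmf_of_set[OF W_ne W_finite])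
  also have "(\<Sum>w\<in>?W. (X_set \<Psi> w - real (card \<Psi>) / 2)^2)
     = (\<Sum>w\<in>?W. \<Sum>\<beta>\<in>\<Psi>. \<Sum>\<gamma>\<in>\<Psi>. (X_root \<beta> w - 1/2) * (X_root \<gamma> w - 1/2))"
    unfolding U by (simp add: power2_eq_square sum_product)
  also have "\<dots> = (\<Sum>\<beta>\<in>\<Psi>. \<Sum>\<gamma>\<in>\<Psi>. \<Sum>w\<in>?W. (X_root \<beta> w - 1/2) * (X_root \<gamma> w - 1/2))"
    by (subst sum.swap) (simp add: sum.swap[of _ ?W])
  also have "\<dots> = (\<Sum>\<beta>\<in>\<Psi>. \<Sum>\<gamma>\<in>\<Psi>. ?N / 12 * ((if \<beta> = \<gamma> then 1 else 0) + (\<Sum>v\<in>{1..n}. rr \<beta> v * rr \<gamma> v)))"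
    by (intro sum.cong refl cov2) (use assms in auto)
  also have "\<dots> = ?N / 12 * ((\<Sum>\<beta>\<in>\<Psi>. \<Sum>\<gamma>\<in>\<Psi>. (if \<beta> = \<gamma> then 1 else 0)) + (\<Sum>\<beta>\<in>\<Psi>. \<Sum>\<gamma>\<in>\<Psi>. \<Sum>v\<in>{1..n}. rr \<beta> v * rr \<gamma> v))"
    by (simp only: sum_distrib_left[symmetric] sum.distrib[symmetric])
  also have "(\<Sum>\<beta>\<in>\<Psi>. \<Sum>\<gamma>\<in>\<Psi>. (if \<beta> = \<gamma> then 1 else 0::real)) = real (card \<Psi>)"
    using fin by simp
  also have "(\<Sum>\<beta>\<in>\<Psi>. \<Sum>\<gamma>\<in>\<Psi>. \<Sum>v\<in>{1..n}. rr \<beta> v * rr \<gamma> v) = (\<Sum>v\<in>{1..n}. (\<Sum>\<beta>\<in>\<Psi>. rr \<beta> v)^2)"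
  proof -
    have "(\<Sum>\<beta>\<in>\<Psi>. \<Sum>\<gamma>\<in>\<Psi>. \<Sum>v\<in>{1..n}. rr \<beta> v * rr \<gamma> v) = (\<Sum>\<beta>\<in>\<Psi>. \<Sum>v\<in>{1..n}. \<Sum>\<gamma>\<in>\<Psi>. rr \<beta> v * rr \<gamma> v)"
      by (intro sum.cong refl sum.swap)
    also have "\<dots> = (\<Sum>v\<in>{1..n}. \<Sum>\<beta>\<in>\<Psi>. \<Sum>\<gamma>\<in>\<Psi>. rr \<beta> v * rr \<gamma> v)"
      by (rule sum.swap)
    finally show ?thesis by (simp add: power2_eq_square sum_product)
  qed
  finally show ?thesis using Npos by simp
qed


lemma sum_dl_card: "finite A \<Longrightarrow> (\<Sum>\<beta>\<in>A. dl (f \<beta>) v) = real (card {\<beta>\<in>A. f \<beta> = v})"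
  by (simp add: dl_def sum.inter_filter[symmetric])

lemma var_formula2: assumes "\<Psi> \<subseteq> pos_roots n"
  shows "var_W n (X_set \<Psi>) = (\<Sum>v\<in>{1..n}. (\<Sum>\<beta>\<in>\<Psi>. dl (fst \<beta>) v)
      + ((\<Sum>\<beta>\<in>\<Psi>. dl (snd \<beta>) v) - (\<Sum>\<beta>\<in>\<Psi>. dl (fst \<beta>) v))^2) / 12"
proof -
  have c: "real (card \<Psi>) = (\<Sum>v\<in>{1..n}. \<Sum>\<beta>\<in>\<Psi>. dl (fst \<beta>) v)"
  proof -
    have "(\<Sum>v\<in>{1..n}. \<Sum>\<beta>\<in>\<Psi>. dl (fst \<beta>) v) = (\<Sum>\<beta>\<in>\<Psi>. \<Sum>v\<in>{1..n}. dl (fst \<beta>) v)"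
      by (rule sum.swap)
    also have "\<dots> = (\<Sum>\<beta>\<in>\<Psi>. 1)"
    proof (rule sum.cong[OF refl])
      fix \<beta> assume "\<beta> \<in> \<Psi>"
      then have "fst \<beta> \<in> {1..n}" using assms by (cases \<beta>) (auto simp: pos_roots_mem)
      then show "(\<Sum>v\<in>{1..n}. dl (fst \<beta>) v) = 1" using dl_sum[of "fst \<beta>" n "fst \<beta>"]
        by (simp add: dl_def)
    qed
    finally show ?thesis by simp
  qed
  show ?thesis unfolding var_formula[OF assms] c rr_def sum_subtractf
    by (simp add: sum.distrib)
qed

lemma split3: fixes f :: "nat \<Rightarrow> real" assumes "a \<le> b" "b \<le> n"
  shows "(\<Sum>v\<in>{1..n}. f v) = (\<Sum>v\<in>{Suc 0..a}. f v) + (\<Sum>v\<in>{Suc a..b}. f v) + (\<Sum>v\<in>{Suc b..n}. f v)"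
proof -
  have e: "\<And>x y. {x..y} = {x..<Suc y}" by auto
  have 1: "sum f {Suc 0..<Suc a} + sum f {Suc a..<Suc b} = sum f {Suc 0..<Suc b}"
    by (rule sum.atLeastLessThan_concat) (use assms in auto)
  have 2: "sum f {Suc 0..<Suc b} + sum f {Suc b..<Suc n} = sum f {Suc 0..<Suc n}"
    by (rule sum.atLeastLessThan_concat) (use assms in auto)
  show ?thesis unfolding e One_nat_def using 1 2 by linarith
qed

lemma quad_sum: assumes "a \<le> b"
  shows "(\<Sum>v\<in>{Suc a..b}. c0 + c1 * real v + c2 * (real v)^2) =
    c0 * (real b - real a) + c1 * (real b * (real b + 1) / 2 - real a * (real a + 1) / 2)
    + c2 * (real b * (real b + 1) * (2 * real b + 1) / 6 - real a * (real a + 1) * (2 * real a + 1) / 6)"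
  using assms
proof (induction b rule: dec_induct)
  case base
  then show ?case by simp
next
  case (step m)
  have A: "(\<Sum>v\<in>{Suc a..Suc m}. c0 + c1 * real v + c2 * (real v)^2) = (\<Sum>v\<in>{Suc a..m}. c0 + c1 * real v + c2 * (real v)^2)
     + (c0 + c1 * real (Suc m) + c2 * (real (Suc m))^2)" using step(1) by (simp add: sum.cl_ivl_Suc)
  show ?case by (subst A, subst step.IH) (simp add: field_simps power2_eq_square)
qed


lemma piece: assumes "a \<le> b" "\<And>v. v \<in> {Suc a..b} \<Longrightarrow> H v = c0 + c1 * real v + c2 * (real v)^2"
  shows "(\<Sum>v\<in>{Suc a..b}. H v) =
    c0 * (real b - real a) + c1 * (real b * (real b + 1) / 2 - real a * (real a + 1) / 2)
    + c2 * (real b * (real b + 1) * (2 * real b + 1) / 6 - real a * (real a + 1) * (2 * real a + 1) / 6)"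
proof -
  have "(\<Sum>v\<in>{Suc a..b}. H v) = (\<Sum>v\<in>{Suc a..b}. c0 + c1 * real v + c2 * (real v)^2)"
    using assms(2) by (rule sum.cong[OF refl])
  then show ?thesis using quad_sum[OF assms(1)] by simp
qed

lemma le_sub: "pos_roots_le n d \<subseteq> pos_roots n" by (auto simp: pos_roots_le_def)
lemma eq_sub: "pos_roots_eq n d \<subseteq> pos_roots n" by (auto simp: pos_roots_eq_def)

lemma le_out: assumes "v \<in> {1..n}"
  shows "(\<Sum>\<beta>\<in>pos_roots_le n d. dl (fst \<beta>) v) = real (min (n - v) d)"
proof -
  have "{\<beta>\<in>pos_roots_le n d. fst \<beta> = v} = (\<lambda>j. (v,j)) ` {v<..v + min (n - v) d}"
    using assms by (auto simp: pos_roots_le_def pos_roots_def height_def image_iff)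
  moreover have "card ((\<lambda>j. (v,j)) ` {v<..v + min (n - v) d}) = min (n - v) d"
    by (subst card_image) (auto simp: inj_on_def)
  moreover have "finite (pos_roots_le n d)" using le_sub pos_roots_finite finite_subset by blast
  ultimately show ?thesis by (simp add: sum_dl_card)
qed

lemma le_in: assumes "v \<in> {1..n}"
  shows "(\<Sum>\<beta>\<in>pos_roots_le n d. dl (snd \<beta>) v) = real (min (v - 1) d)"
proof -
  have "{\<beta>\<in>pos_roots_le n d. snd \<beta> = v} = (\<lambda>i. (i,v)) ` {v - min (v - 1) d..<v}"
    using assms by (auto simp: pos_roots_le_def pos_roots_def height_def image_iff)
  moreover have "card ((\<lambda>i. (i,v)) ` {v - min (v - 1) d..<v}) = min (v - 1) d"
    using assms by (subst card_image) (auto simp: inj_on_def)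
  moreover have "finite (pos_roots_le n d)" using le_sub pos_roots_finite finite_subset by blast
  ultimately show ?thesis by (simp add: sum_dl_card)
qed

lemma eq_out: assumes "v \<in> {1..n}" "1 \<le> d"
  shows "(\<Sum>\<beta>\<in>pos_roots_eq n d. dl (fst \<beta>) v) = (if v + d \<le> n then 1 else 0)"
proof -
  have "{\<beta>\<in>pos_roots_eq n d. fst \<beta> = v} = (if v + d \<le> n then {(v, v + d)} else {})"
    using assms by (auto simp: pos_roots_eq_def pos_roots_def height_def)
  moreover have "finite (pos_roots_eq n d)" using eq_sub pos_roots_finite finite_subset by blast
  ultimately show ?thesis by (simp add: sum_dl_card)
qed

lemma eq_in: assumes "v \<in> {1..n}" "1 \<le> d"
  shows "(\<Sum>\<beta>\<in>pos_roots_eq n d. dl (snd \<beta>) v) = (if d < v then 1 else 0)"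
proof -
  have "{\<beta>\<in>pos_roots_eq n d. snd \<beta> = v} = (if d < v then {(v - d, v)} else {})"
    using assms by (auto simp: pos_roots_eq_def pos_roots_def height_def)
  moreover have "finite (pos_roots_eq n d)" using eq_sub pos_roots_finite finite_subset by blast
  ultimately show ?thesis by (simp add: sum_dl_card)
qed

lemma le_var: "var_W n (X_set (pos_roots_le n d)) = (\<Sum>v\<in>{1..n}. real (min (n - v) d)
      + (real (min (v - 1) d) - real (min (n - v) d))^2) / 12"
  unfolding var_formula2[OF le_sub] by (simp add: le_in le_out)

lemma eq_var: "1 \<le> d \<Longrightarrow> var_W n (X_set (pos_roots_eq n d)) = (\<Sum>v\<in>{1..n}. (if v + d \<le> n then 1 else 0)
      + ((if d < v then 1 else 0) - (if v + d \<le> n then 1 else 0))^2) / 12"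
  unfolding var_formula2[OF eq_sub] by (simp add: eq_in eq_out)


lemma eq_small: assumes "1 \<le> d" "2 * d \<le> n"
  shows "var_W n (X_set (pos_roots_eq n d)) = (real n + real d) / 12"
proof -
  let ?H = "\<lambda>v. (if v + d \<le> n then 1 else 0) + ((if d < v then 1 else 0) - (if v + d \<le> n then 1 else 0::real))^2"
  have s: "(\<Sum>v\<in>{1..n}. ?H v) = (\<Sum>v\<in>{Suc 0..d}. ?H v) + (\<Sum>v\<in>{Suc d..n - d}. ?H v) + (\<Sum>v\<in>{Suc (n - d)..n}. ?H v)"
    by (rule split3) (use assms in auto)
  have p1: "(\<Sum>v\<in>{Suc 0..d}. ?H v) = 2 * (real d - real 0) + 0 * (real d * (real d + 1) / 2 - real 0 * (real 0 + 1) / 2)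
    + 0 * (real d * (real d + 1) * (2 * real d + 1) / 6 - real 0 * (real 0 + 1) * (2 * real 0 + 1) / 6)"
    by (rule piece) (use assms in auto)
  have p2: "(\<Sum>v\<in>{Suc d..n - d}. ?H v) = 1 * (real (n - d) - real d) + 0 * (real (n - d) * (real (n - d) + 1) / 2 - real d * (real d + 1) / 2)
    + 0 * (real (n - d) * (real (n - d) + 1) * (2 * real (n - d) + 1) / 6 - real d * (real d + 1) * (2 * real d + 1) / 6)"
    by (rule piece) (use assms in auto)
  have p3: "(\<Sum>v\<in>{Suc (n - d)..n}. ?H v) = 1 * (real n - real (n - d)) + 0 * (real n * (real n + 1) / 2 - real (n - d) * (real (n - d) + 1) / 2)
    + 0 * (real n * (real n + 1) * (2 * real n + 1) / 6 - real (n - d) * (real (n - d) + 1) * (2 * real (n - d) + 1) / 6)"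
    by (rule piece) (use assms in auto)
  show ?thesis unfolding eq_var[OF assms(1)] s p1 p2 p3 using assms by (simp add: of_nat_diff)
qed

lemma eq_big: assumes "1 \<le> d" "d \<le> n" "n \<le> 2 * d"
  shows "var_W n (X_set (pos_roots_eq n d)) = (real n - real d) / 4"
proof -
  let ?H = "\<lambda>v. (if v + d \<le> n then 1 else 0) + ((if d < v then 1 else 0) - (if v + d \<le> n then 1 else 0::real))^2"
  have s: "(\<Sum>v\<in>{1..n}. ?H v) = (\<Sum>v\<in>{Suc 0..n - d}. ?H v) + (\<Sum>v\<in>{Suc (n - d)..d}. ?H v) + (\<Sum>v\<in>{Suc d..n}. ?H v)"
    by (rule split3) (use assms in auto)
  have p1: "(\<Sum>v\<in>{Suc 0..n - d}. ?H v) = 2 * (real (n - d) - real 0) + 0 * (real (n - d) * (real (n - d) + 1) / 2 - real 0 * (real 0 + 1) / 2)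
    + 0 * (real (n - d) * (real (n - d) + 1) * (2 * real (n - d) + 1) / 6 - real 0 * (real 0 + 1) * (2 * real 0 + 1) / 6)"
    by (rule piece) (use assms in auto)
  have p2: "(\<Sum>v\<in>{Suc (n - d)..d}. ?H v) = 0 * (real d - real (n - d)) + 0 * (real d * (real d + 1) / 2 - real (n - d) * (real (n - d) + 1) / 2)
    + 0 * (real d * (real d + 1) * (2 * real d + 1) / 6 - real (n - d) * (real (n - d) + 1) * (2 * real (n - d) + 1) / 6)"
    by (rule piece) (use assms in auto)
  have p3: "(\<Sum>v\<in>{Suc d..n}. ?H v) = 1 * (real n - real d) + 0 * (real n * (real n + 1) / 2 - real d * (real d + 1) / 2)
    + 0 * (real n * (real n + 1) * (2 * real n + 1) / 6 - real d * (real d + 1) * (2 * real d + 1) / 6)"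
    by (rule piece) (use assms in auto)
  show ?thesis unfolding eq_var[OF assms(1)] s p1 p2 p3 using assms by (simp add: of_nat_diff)
qed


abbreviation "S1 (x::real) \<equiv> x * (x + 1) / 2"
abbreviation "S2 (x::real) \<equiv> x * (x + 1) * (2 * x + 1) / 6"

lemma le_small: assumes "1 \<le> d" "2 * d \<le> n"
  shows "var_W n (X_set (pos_roots_le n d)) =
            (1/18) * real d ^ 3 + (1/24) * real d ^ 2 + ((1/12) * real n - 1/72) * real d"
proof -
  let ?H = "\<lambda>v. real (min (n - v) d) + (real (min (v - 1) d) - real (min (n - v) d))^2"
  have s: "(\<Sum>v\<in>{1..n}. ?H v) = (\<Sum>v\<in>{Suc 0..d}. ?H v) + (\<Sum>v\<in>{Suc d..n - d}. ?H v) + (\<Sum>v\<in>{Suc (n - d)..n}. ?H v)"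
    by (rule split3) (use assms in auto)
  have p1: "(\<Sum>v\<in>{Suc 0..d}. ?H v) = (real d + (real d + 1)^2) * (real d - real 0) + (- 2 * (real d + 1)) * (S1 (real d) - S1 (real 0))
    + 1 * (S2 (real d) - S2 (real 0))"
  proof (rule piece)
    fix v assume v: "v \<in> {Suc 0..d}"
    then have "min (n - v) d = d" "min (v - 1) d = v - 1" using assms by auto
    then show "?H v = (real d + (real d + 1)^2) + (- 2 * (real d + 1)) * real v + 1 * (real v)^2"
      using v by (simp add: of_nat_diff power2_eq_square algebra_simps)
  qed (use assms in auto)
  have p2: "(\<Sum>v\<in>{Suc d..n - d}. ?H v) = real d * (real (n - d) - real d) + 0 * (S1 (real (n - d)) - S1 (real d))
    + 0 * (S2 (real (n - d)) - S2 (real d))"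
  proof (rule piece)
    fix v assume v: "v \<in> {Suc d..n - d}"
    then have "min (n - v) d = d" "min (v - 1) d = d" using assms by auto
    then show "?H v = real d + 0 * real v + 0 * (real v)^2"
      using v by simp
  qed (use assms in auto)
  have p3: "(\<Sum>v\<in>{Suc (n - d)..n}. ?H v) = (real n + (real d - real n)^2) * (real n - real (n - d))
    + (2 * (real d - real n) - 1) * (S1 (real n) - S1 (real (n - d)))
    + 1 * (S2 (real n) - S2 (real (n - d)))"
  proof (rule piece)
    fix v assume v: "v \<in> {Suc (n - d)..n}"
    then have "min (n - v) d = n - v" "min (v - 1) d = d" using assms by auto
    then show "?H v = (real n + (real d - real n)^2) + (2 * (real d - real n) - 1) * real v + 1 * (real v)^2"
      using v by (simp add: of_nat_diff power2_eq_square algebra_simps)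
  qed (use assms in auto)
  have nd: "real (n - d) = real n - real d" using assms by (simp add: of_nat_diff)
  show ?thesis unfolding le_var s p1 p2 p3 nd
    by (simp add: field_simps power2_eq_square power3_eq_cube)
qed

lemma le_big: assumes "1 \<le> d" "d \<le> n" "n \<le> 2 * d"
  shows "var_W n (X_set (pos_roots_le n d)) =
            - (1/6) * real d ^ 3 + ((1/3) * real n - 7/24) * real d ^ 2
            + (- (1/6) * real n ^ 2 + (5/12) * real n - 1/8) * real d
            + ((1/36) * real n ^ 3 - (1/12) * real n ^ 2 + (1/18) * real n)"
proof -
  let ?H = "\<lambda>v. real (min (n - v) d) + (real (min (v - 1) d) - real (min (n - v) d))^2"
  have s: "(\<Sum>v\<in>{1..n}. ?H v) = (\<Sum>v\<in>{Suc 0..n - d}. ?H v) + (\<Sum>v\<in>{Suc (n - d)..d}. ?H v) + (\<Sum>v\<in>{Suc d..n}. ?H v)"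
    by (rule split3) (use assms in auto)
  have p1: "(\<Sum>v\<in>{Suc 0..n - d}. ?H v) = (real d + (real d + 1)^2) * (real (n - d) - real 0) + (- 2 * (real d + 1)) * (S1 (real (n - d)) - S1 (real 0))
    + 1 * (S2 (real (n - d)) - S2 (real 0))"
  proof (rule piece)
    fix v assume v: "v \<in> {Suc 0..n - d}"
    then have "min (n - v) d = d" "min (v - 1) d = v - 1" using assms by auto
    then show "?H v = (real d + (real d + 1)^2) + (- 2 * (real d + 1)) * real v + 1 * (real v)^2"
      using v by (simp add: of_nat_diff power2_eq_square algebra_simps)
  qed (use assms in auto)
  have p2: "(\<Sum>v\<in>{Suc (n - d)..d}. ?H v) = (real n + (real n + 1)^2) * (real d - real (n - d))
    + (- 1 - 4 * (real n + 1)) * (S1 (real d) - S1 (real (n - d)))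
    + 4 * (S2 (real d) - S2 (real (n - d)))"
  proof (rule piece)
    fix v assume v: "v \<in> {Suc (n - d)..d}"
    then have "min (n - v) d = n - v" "min (v - 1) d = v - 1" using assms by auto
    then show "?H v = (real n + (real n + 1)^2) + (- 1 - 4 * (real n + 1)) * real v + 4 * (real v)^2"
      using v assms by (simp add: of_nat_diff power2_eq_square algebra_simps)
  qed (use assms in auto)
  have p3: "(\<Sum>v\<in>{Suc d..n}. ?H v) = (real n + (real d - real n)^2) * (real n - real d)
    + (2 * (real d - real n) - 1) * (S1 (real n) - S1 (real d))
    + 1 * (S2 (real n) - S2 (real d))"
  proof (rule piece)
    fix v assume v: "v \<in> {Suc d..n}"
    then have "min (n - v) d = n - v" "min (v - 1) d = d" using assms by auto
    then show "?H v = (real n + (real d - real n)^2) + (2 * (real d - real n) - 1) * real v + 1 * (real v)^2"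
      using v by (simp add: of_nat_diff power2_eq_square algebra_simps)
  qed (use assms in auto)
  have nd: "real (n - d) = real n - real d" using assms by (simp add: of_nat_diff)
  show ?thesis unfolding le_var s p1 p2 p3 nd
    by (simp add: field_simps power2_eq_square power3_eq_cube)
qed

theorem theoremA1:
  fixes n d :: nat
  assumes "1 \<le> d" and "d \<le> n"
  shows "(2 * d \<le> n \<longrightarrow> var_W n (X_set (pos_roots_eq n d)) = (real n + real d) / 12)
       \<and> (2 * d \<ge> n \<longrightarrow> var_W n (X_set (pos_roots_eq n d)) = (real n - real d) / 4)
       \<and> (2 * d \<le> n \<longrightarrow> var_W n (X_set (pos_roots_le n d)) =
            (1/18) * real d ^ 3 + (1/24) * real d ^ 2 + ((1/12) * real n - 1/72) * real d)
       \<and> (2 * d \<ge> n \<longrightarrow> var_W n (X_set (pos_roots_le n d)) =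
            - (1/6) * real d ^ 3 + ((1/3) * real n - 7/24) * real d ^ 2
            + (- (1/6) * real n ^ 2 + (5/12) * real n - 1/8) * real d
            + ((1/36) * real n ^ 3 - (1/12) * real n ^ 2 + (1/18) * real n))"
  using eq_small[OF assms(1)] eq_big[OF assms] le_small[OF assms(1)] le_big[OF assms] by blast

end
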